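(* Let $(\mathcal E,B,\mathcal L_{\mathcal P})$ be an epistemic space and $\mathcal S$ a set of agents. An ES combination operator $\nabla$ is an ES basic fusion operator if and only if there exists a unique basic assignment $\Phi\mapsto\succeq_\Phi$ such that for every profile $\Phi$ and every $E\in\mathcal E$, $$[\![B(\nabla(\Phi,E))]\!]=\max\big([\![B(E)]\!],\succeq_\Phi\big).$$
   Context: $\mathcal L_{\mathcal P}$ is the set of propositional formulas over a finite set $\mathcal P$ of variables, $\mathcal W_{\mathcal P}$ its set of valuations, $[\![\phi]\!]$ the set of models of $\phi$. An epistemic space is a triple $(\mathcal E,B,\mathcal L_{\mathcal P})$ with $\mathcal E$ a nonempty set and $B:\mathcal E\to\mathcal L_{\mathcal P}$ whose image modulo logical equivalence is exactly the set of consistent formulas modulo equivalence. Agents form a well-ordered set $(\mathcal S,<)$; a society is a nonempty finite $N\subseteq\mathcal S$; an $N$-profile is a function $\Phi:N\to\mathcal E$, $E_i:=\Phi(i)$; for $N=\{i\}$ it is identified with $E_i$. Profiles $\Phi$ on $N=\{i_1<\dots<i_n\}$ and $\Psi$ on $M=\{j_1<\dots<j_m\}$ are equivalent, $\Phi\equiv\Psi$, if $n=m$ and $\Phi(i_k)=\Psi(j_k)$ for all $k$. An ES combination operator $\nabla$ assigns to every profile $\Phi$ and every $E\in\mathcal E$ an element $\nabla(\Phi,E)\in\mathcal E$. It is an ES basic fusion operator if for all profiles $\Phi,\Phi'$ and $E,E',E''$: (ESF1) $B(\nabla(\Phi,E))\vdash B(E)$; (ESF2) if $\Phi\equiv\Phi'$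 and $B(E)\equiv B(E')$ then $B(\nabla(\Phi,E))\equiv B(\nabla(\Phi',E'))$; (ESF3) if $B(E)\equiv B(E')\wedge B(E'')$ then $B(\nabla(\Phi,E'))\wedge B(E'')\vdash B(\nabla(\Phi,E))$; (ESF4) if $B(E)\equiv B(E')\wedge B(E'')$ and $B(\nabla(\Phi,E'))\wedge B(E'')\nvdash\bot$ then $B(\nabla(\Phi,E))\vdash B(\nabla(\Phi,E'))\wedge B(E'')$. An assignment maps each profile $\Phi$ to a total preorder $\succeq_\Phi$ on $\mathcal W_{\mathcal P}$; it is basic if $\Phi\equiv\Psi$ implies $\succeq_\Phi=\succeq_\Psi$. For a total preorder $\succeq$ and set $C$, $\max(C,\succeq)=\{c\in C:\ c\succeq x\text{ for all }x\in C\}$. *)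

theory Defs
  imports Main
begin

datatype 'p form =
    Atom 'p
  | Bot
  | Neg "'p form"
  | Conj "'p form" "'p form"
  | Disj "'p form" "'p form"
  | Imp "'p form" "'p form"

type_synonym 'p valuation = "'p set"

fun sat :: "'p valuation \<Rightarrow> 'p form \<Rightarrow> bool" where
  "sat w (Atom p) = (p \<in> w)"
| "sat w Bot = False"
| "sat w (Neg f) = (\<not> sat w f)"
| "sat w (Conj f g) = (sat w f \<and> sat w g)"
| "sat w (Disj f g) = (sat w f \<or> sat w g)"
| "sat w (Imp f g) = (sat w f \<longrightarrow> sat w g)"

definition models :: "'p form \<Rightarrow> 'p valuation set" where
  "models f = {w. sat w f}"

definition entails :: "'p form \<Rightarrow> 'p form \<Rightarrow> bool" (infix "\<turnstile>\<^sub>P" 55) where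
  "f \<turnstile>\<^sub>P g \<longleftrightarrow> models f \<subseteq> models g"

definition lequiv :: "'p form \<Rightarrow> 'p form \<Rightarrow> bool" (infix "\<equiv>\<^sub>P" 55) where
  "f \<equiv>\<^sub>P g \<longleftrightarrow> models f = models g"

definition consistent :: "'p form \<Rightarrow> bool" where
  "consistent f \<longleftrightarrow> \<not> (f \<turnstile>\<^sub>P Bot)"

definition epistemic_space :: "('e \<Rightarrow> 'p form) \<Rightarrow> bool" where
  "epistemic_space B \<longleftrightarrow>
     (\<forall>e. consistent (B e)) \<and> (\<forall>f. consistent f \<longrightarrow> (\<exists>e. B e \<equiv>\<^sub>P f))"

text \<open>Agents form the well-ordered type 's. A profile is a partial map from agents to
  epistemic states whose domain (the society) is finite and nonempty.\<close>
definition is_profile :: "('s \<rightharpoonup> 'e) \<Rightarrow> bool" where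
  "is_profile \<Phi> \<longleftrightarrow> finite (dom \<Phi>) \<and> dom \<Phi> \<noteq> {}"

definition profile_list :: "('s::linorder \<rightharpoonup> 'e) \<Rightarrow> 'e list" where
  "profile_list \<Phi> = map (\<lambda>i. the (\<Phi> i)) (sorted_list_of_set (dom \<Phi>))"

definition profile_equiv :: "('s::linorder \<rightharpoonup> 'e) \<Rightarrow> ('s \<rightharpoonup> 'e) \<Rightarrow> bool" where
  "profile_equiv \<Phi> \<Psi> \<longleftrightarrow> profile_list \<Phi> = profile_list \<Psi>"

definition es_basic_fusion ::
  "('e \<Rightarrow> 'p form) \<Rightarrow> (('s::wellorder \<rightharpoonup> 'e) \<Rightarrow> 'e \<Rightarrow> 'e) \<Rightarrow> bool" where
  "es_basic_fusion B nabla \<longleftrightarrow>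
     (\<forall>\<Phi> E. is_profile \<Phi> \<longrightarrow> B (nabla \<Phi> E) \<turnstile>\<^sub>P B E) \<and>
     (\<forall>\<Phi> \<Phi>' E E'. is_profile \<Phi> \<longrightarrow> is_profile \<Phi>' \<longrightarrow>
         profile_equiv \<Phi> \<Phi>' \<longrightarrow> B E \<equiv>\<^sub>P B E' \<longrightarrow>
         B (nabla \<Phi> E) \<equiv>\<^sub>P B (nabla \<Phi>' E')) \<and>
     (\<forall>\<Phi> E E' E''. is_profile \<Phi> \<longrightarrow> B E \<equiv>\<^sub>P Conj (B E') (B E'') \<longrightarrow>
         Conj (B (nabla \<Phi> E')) (B E'') \<turnstile>\<^sub>P B (nabla \<Phi> E)) \<and>
     (\<forall>\<Phi> E E' E''. is_profile \<Phi> \<longrightarrow> B E \<equiv>\<^sub>P Conj (B E') (B E'') \<longrightarrow>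
         \<not> (Conj (B (nabla \<Phi> E')) (B E'') \<turnstile>\<^sub>P Bot) \<longrightarrow>
         B (nabla \<Phi> E) \<turnstile>\<^sub>P Conj (B (nabla \<Phi> E')) (B E''))"

definition total_preorder :: "('a \<Rightarrow> 'a \<Rightarrow> bool) \<Rightarrow> bool" where
  "total_preorder r \<longleftrightarrow> (\<forall>x y z. r x y \<longrightarrow> r y z \<longrightarrow> r x z) \<and> (\<forall>x y. r x y \<or> r y x)"

text \<open>An assignment maps each profile to a total preorder on valuations
  (its values on non-profiles are irrelevant).\<close>
definition assignment :: "(('s \<rightharpoonup> 'e) \<Rightarrow> ('p valuation \<Rightarrow> 'p valuation \<Rightarrow> bool)) \<Rightarrow> bool" where
  "assignment A \<longleftrightarrow> (\<forall>\<Phi>. is_profile \<Phi> \<longrightarrow> total_preorder (A \<Phi>))"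

definition basic_assignment ::
  "(('s::linorder \<rightharpoonup> 'e) \<Rightarrow> ('p valuation \<Rightarrow> 'p valuation \<Rightarrow> bool)) \<Rightarrow> bool" where
  "basic_assignment A \<longleftrightarrow> assignment A \<and>
     (\<forall>\<Phi> \<Psi>. is_profile \<Phi> \<longrightarrow> is_profile \<Psi> \<longrightarrow> profile_equiv \<Phi> \<Psi> \<longrightarrow> A \<Phi> = A \<Psi>)"

definition max_set :: "'a set \<Rightarrow> ('a \<Rightarrow> 'a \<Rightarrow> bool) \<Rightarrow> 'a set" where
  "max_set C r = {c \<in> C. \<forall>x\<in>C. r c x}"

definition represents ::
  "('e \<Rightarrow> 'p form) \<Rightarrow> (('s \<rightharpoonup> 'e) \<Rightarrow> 'e \<Rightarrow> 'e)
     \<Rightarrow> (('s \<rightharpoonup> 'e) \<Rightarrow> ('p valuation \<Rightarrow> 'p valuation \<Rightarrow> bool)) \<Rightarrow> bool" where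
  "represents B nabla A \<longleftrightarrow>
     (\<forall>\<Phi> E. is_profile \<Phi> \<longrightarrow> models (B (nabla \<Phi> E)) = max_set (models (B E)) (A \<Phi>))"

end

theory Submission
  imports Defs
begin

lemma models_Conj[simp]: "models (Conj f g) = models f \<inter> models g"
  by (auto simp: models_def)
lemma models_Bot[simp]: "models Bot = {}"
  by (auto simp: models_def)

definition charf :: "'p list \<Rightarrow> 'p set \<Rightarrow> 'p form" where
  "charf ps w = foldr (\<lambda>p acc. Conj (if p \<in> w then Atom p else Neg (Atom p)) acc) ps (Neg Bot)"

lemma sat_charf: "sat v (charf ps w) \<longleftrightarrow> (\<forall>p\<in>set ps. p \<in> v \<longleftrightarrow> p \<in> w)"
  by (induction ps) (auto simp: charf_def)

definition disjf :: "'p list \<Rightarrow> 'p set list \<Rightarrow> 'p form" where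
  "disjf ps ws = foldr (\<lambda>w acc. Disj (charf ps w) acc) ws Bot"

lemma sat_disjf: "sat v (disjf ps ws) \<longleftrightarrow> (\<exists>w\<in>set ws. sat v (charf ps w))"
  by (induction ws) (auto simp: disjf_def)

lemma definable:
  fixes S :: "'p::finite set set"
  shows "\<exists>f. models f = S"
proof -
  obtain ps :: "'p list" where ps: "set ps = UNIV" using finite_list[of "UNIV::'p set"] finite_UNIV by blast
  have "finite S" by simp
  then obtain ws where ws: "set ws = S" using finite_list[of S] by blast
  have "models (disjf ps ws) = S"
  proof -
    have "sat v (charf ps w) \<longleftrightarrow> v = w" for v w using ps by (auto simp: sat_charf)
    then show ?thesis unfolding models_def using ws by (auto simp: sat_disjf)
  qed
  then show ?thesis by blast
qed

lemma es_exists: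
  fixes B :: "'e \<Rightarrow> 'p::finite form"
  assumes "epistemic_space B" "S \<noteq> {}"
  shows "\<exists>e. models (B e) = S"
proof -
  obtain f :: "'p form" where f: "models f = S" using definable by blast
  then have "consistent f" using assms(2) by (auto simp: consistent_def entails_def)
  then obtain e where "B e \<equiv>\<^sub>P f" using assms(1) by (auto simp: epistemic_space_def)
  then show ?thesis using f by (auto simp: lequiv_def)
qed

lemma es_nonempty:
  assumes "epistemic_space B" shows "models (B e) \<noteq> {}"
  using assms by (auto simp: epistemic_space_def consistent_def entails_def)

lemma abstract_choice:
  fixes G :: "'a set \<Rightarrow> 'a set"
  assumes G1: "\<And>S. S \<noteq> {} \<Longrightarrow> G S \<subseteq> S"
    and G2: "\<And>S. S \<noteq> {} \<Longrightarrow> G S \<noteq> {}"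
    and G3: "\<And>S T. T \<noteq> {} \<Longrightarrow> T \<subseteq> S \<Longrightarrow> G S \<inter> T \<subseteq> G T"
    and G4: "\<And>S T. T \<subseteq> S \<Longrightarrow> G S \<inter> T \<noteq> {} \<Longrightarrow> G T = G S \<inter> T"
  defines "R \<equiv> \<lambda>w w'. w \<in> G {w, w'}"
  shows "\<And>S. S \<noteq> {} \<Longrightarrow> G S = max_set S R" and "total_preorder R"
proof -
  show mx: "G S = max_set S R" if ne: "S \<noteq> {}" for S
  proof
    show "G S \<subseteq> max_set S R"
    proof
      fix c assume c: "c \<in> G S"
      have cS: "c \<in> S" using c G1 ne by blast
      have "R c x" if "x \<in> S" for x
        using G3[of "{c,x}" S] c cS that unfolding R_def by blast
      then show "c \<in> max_set S R" using cS by (auto simp: max_set_def)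
    qed
  next
    show "max_set S R \<subseteq> G S"
    proof
      fix c assume "c \<in> max_set S R"
      then have cS: "c \<in> S" and dom: "\<forall>x\<in>S. c \<in> G {c,x}"
        by (auto simp: max_set_def R_def)
      obtain d where d: "d \<in> G S" using G2[OF ne] by blast
      have dS: "d \<in> S" using d G1 ne by blast
      have "G {c,d} = G S \<inter> {c,d}" using G4[of "{c,d}" S] d cS dS by blast
      then show "c \<in> G S" using dom dS by blast
    qed
  qed
  show "total_preorder R"
    unfolding total_preorder_def
  proof (intro conjI allI impI)
    fix x y z assume xy: "R x y" and yz: "R y z"
    define T where "T = {x,y,z}"
    have xyz: "G T = max_set T R" using mx[of T] by (simp add: T_def)
    have yx: "x \<in> G T" if "y \<in> G T"
    proof -
      have "G {x,y} = G T \<inter> {x,y}" using G4[of "{x,y}" T] that by (auto simp: T_def)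
      then show ?thesis using xy unfolding R_def by blast
    qed
    have "x \<in> G T"
    proof -
      obtain d where d: "d \<in> G T" using G2[of T] by (auto simp: T_def)
      have "d \<in> T" using d G1[of T] by (auto simp: T_def)
      then consider "d = x" | "d = y" | "d = z" by (auto simp: T_def)
      then show ?thesis
      proof cases
        case 1 then show ?thesis using d by simp
      next
        case 2 then show ?thesis using d yx by simp
      next
        case 3
        have "G {y,z} = G T \<inter> {y,z}" using G4[of "{y,z}" T] d 3 by (auto simp: T_def)
        then have "y \<in> G T" using yz unfolding R_def by blast
        then show ?thesis using yx by simp
      qed
    qed
    then show "R x z" using G3[of "{x,z}" T] unfolding R_def by (auto simp: T_def)
  next
    fix x y
    show "R x y \<or> R y x"
      using G1[of "{x,y}"] G2[of "{x,y}"] unfolding R_def by (auto simp: insert_commute)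
  qed
qed

lemma tp_max_pair:
  assumes "total_preorder r"
  shows "r w w' \<longleftrightarrow> w \<in> max_set {w, w'} r"
  using assms unfolding total_preorder_def max_set_def by blast

lemma profile_equiv_refl: "profile_equiv \<Phi> \<Phi>"
  by (simp add: profile_equiv_def)

theorem theorem1:
  fixes B :: "'e \<Rightarrow> 'p::finite form"
    and nabla :: "('s::wellorder \<rightharpoonup> 'e) \<Rightarrow> 'e \<Rightarrow> 'e"
  assumes "epistemic_space B"
  shows "es_basic_fusion B nabla \<longleftrightarrow>
    (\<exists>A. basic_assignment A \<and> represents B nabla A \<and>
       (\<forall>A'. basic_assignment A' \<and> represents B nabla A' \<longrightarrow>
          (\<forall>\<Phi>. is_profile \<Phi> \<longrightarrow> A' \<Phi> = A \<Phi>)))"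
proof
  assume F: "es_basic_fusion B nabla"
  note E1 = F[unfolded es_basic_fusion_def, THEN conjunct1, rule_format]
  note E2 = F[unfolded es_basic_fusion_def, THEN conjunct2, THEN conjunct1, rule_format]
  note E3 = F[unfolded es_basic_fusion_def, THEN conjunct2, THEN conjunct2, THEN conjunct1, rule_format]
  note E4 = F[unfolded es_basic_fusion_def, THEN conjunct2, THEN conjunct2, THEN conjunct2, rule_format]
  define rep where "rep S = (SOME e. models (B e) = S)" for S
  have rep: "models (B (rep S)) = S" if "S \<noteq> {}" for S
    unfolding rep_def using es_exists[OF assms that] by (rule someI_ex)
  define G where "G \<Phi> S = models (B (nabla \<Phi> (rep S)))" for \<Phi> S
  have Feq: "models (B (nabla \<Phi> E)) = G \<Phi> (models (B E))" if P: "is_profile \<Phi>" for \<Phi> E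
  proof -
    have "models (B (rep (models (B E)))) = models (B E)"
      using rep es_nonempty[OF assms] by blast
    then show ?thesis unfolding G_def
      using E2[OF P P profile_equiv_refl, of "rep (models (B E))" E]
      by (auto simp: lequiv_def)
  qed
  have Gf: "\<And>S. S \<noteq> {} \<Longrightarrow> G \<Phi> S \<subseteq> S"
    and Gn: "\<And>S. S \<noteq> {} \<Longrightarrow> G \<Phi> S \<noteq> {}"
    and G3: "\<And>S T. T \<noteq> {} \<Longrightarrow> T \<subseteq> S \<Longrightarrow> G \<Phi> S \<inter> T \<subseteq> G \<Phi> T"
    and G4: "\<And>S T. T \<subseteq> S \<Longrightarrow> G \<Phi> S \<inter> T \<noteq> {} \<Longrightarrow> G \<Phi> T = G \<Phi> S \<inter> T"
    if P: "is_profile \<Phi>" for \<Phi>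
  proof -
    show "G \<Phi> S \<subseteq> S" if "S \<noteq> {}" for S
      using E1[OF P, of "rep S"] rep[OF that] unfolding G_def entails_def by simp
    show "G \<Phi> S \<noteq> {}" if "S \<noteq> {}" for S
      using es_nonempty[OF assms] unfolding G_def by blast
    have g3: "G \<Phi> S \<inter> T \<subseteq> G \<Phi> T" if "T \<noteq> {}" "T \<subseteq> S" for S T
    proof -
      have S: "S \<noteq> {}" using that by blast
      have "B (rep T) \<equiv>\<^sub>P Conj (B (rep S)) (B (rep T))"
        using rep[OF S] rep[OF that(1)] that(2) by (auto simp: lequiv_def)
      from E3[OF P this] show ?thesis
        using rep[OF that(1)] unfolding G_def entails_def by simp
    qed
    then show "\<And>S T. T \<noteq> {} \<Longrightarrow> T \<subseteq> S \<Longrightarrow> G \<Phi> S \<inter> T \<subseteq> G \<Phi> T" by blast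
    show "G \<Phi> T = G \<Phi> S \<inter> T" if "T \<subseteq> S" "G \<Phi> S \<inter> T \<noteq> {}" for S T
    proof -
      have T: "T \<noteq> {}" using that by blast
      have S: "S \<noteq> {}" using that by blast
      have eq: "B (rep T) \<equiv>\<^sub>P Conj (B (rep S)) (B (rep T))"
        using rep[OF S] rep[OF T] that(1) by (auto simp: lequiv_def)
      have "\<not> (Conj (B (nabla \<Phi> (rep S))) (B (rep T)) \<turnstile>\<^sub>P Bot)"
        using that(2) rep[OF T] unfolding G_def entails_def by simp
      from E4[OF P eq this] have "G \<Phi> T \<subseteq> G \<Phi> S \<inter> T"
        using rep[OF T] unfolding G_def entails_def by simp
      then show ?thesis using g3[OF T that(1)] by blast
    qed
  qed
  define A where "A \<Phi> w w' = (w \<in> G \<Phi> {w, w'})" for \<Phi> w w'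
  have AC: "total_preorder (A \<Phi>) \<and> (\<forall>S. S \<noteq> {} \<longrightarrow> G \<Phi> S = max_set S (A \<Phi>))"
    if P: "is_profile \<Phi>" for \<Phi>
  proof -
    have R: "A \<Phi> = (\<lambda>w w'. w \<in> G \<Phi> {w, w'})" by (simp add: A_def fun_eq_iff)
    show ?thesis unfolding R
      using abstract_choice[of "G \<Phi>", OF Gf[OF P] Gn[OF P] G3[OF P] G4[OF P]] by blast
  qed
  have rp: "represents B nabla A"
    unfolding represents_def
  proof (intro allI impI)
    fix \<Phi> :: "'s \<rightharpoonup> 'e" and E assume P: "is_profile \<Phi>"
    show "models (B (nabla \<Phi> E)) = max_set (models (B E)) (A \<Phi>)"
      using Feq[OF P] AC[OF P] es_nonempty[OF assms] by metis
  qed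
  have ba: "basic_assignment A"
    unfolding basic_assignment_def assignment_def
  proof (intro conjI allI impI)
    fix \<Phi> :: "'s \<rightharpoonup> 'e" assume "is_profile \<Phi>" then show "total_preorder (A \<Phi>)" using AC by blast
  next
    fix \<Phi> \<Psi> :: "'s \<rightharpoonup> 'e" assume P: "is_profile \<Phi>" and Q: "is_profile \<Psi>" and eq: "profile_equiv \<Phi> \<Psi>"
    have "G \<Phi> S = G \<Psi> S" for S
      using E2[OF P Q eq, of "rep S" "rep S"] unfolding G_def lequiv_def by simp
    then show "A \<Phi> = A \<Psi>" by (simp add: A_def fun_eq_iff)
  qed
  have un: "\<forall>A'. basic_assignment A' \<and> represents B nabla A' \<longrightarrow>
          (\<forall>\<Phi>. is_profile \<Phi> \<longrightarrow> A' \<Phi> = A \<Phi>)"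
  proof (intro allI impI)
    fix A' and \<Phi> :: "'s \<rightharpoonup> 'e" assume H: "basic_assignment A' \<and> represents B nabla A'" and P: "is_profile \<Phi>"
    have t': "total_preorder (A' \<Phi>)" using H P by (auto simp: basic_assignment_def assignment_def)
    have t: "total_preorder (A \<Phi>)" using AC[OF P] by blast
    show "A' \<Phi> = A \<Phi>"
    proof (intro ext)
      fix w w' :: "'p set"
      have ne: "{w, w'} \<noteq> {}" by simp
      have "max_set {w, w'} (A' \<Phi>) = models (B (nabla \<Phi> (rep {w,w'})))"
        using H P rep[OF ne] by (auto simp: represents_def)
      also have "\<dots> = max_set {w, w'} (A \<Phi>)"
        using rp P rep[OF ne] by (auto simp: represents_def)
      finally show "A' \<Phi> w w' = A \<Phi> w w'"
        using tp_max_pair[OF t'] tp_max_pair[OF t] by blast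
    qed
  qed
  show "\<exists>A. basic_assignment A \<and> represents B nabla A \<and>
       (\<forall>A'. basic_assignment A' \<and> represents B nabla A' \<longrightarrow>
          (\<forall>\<Phi>. is_profile \<Phi> \<longrightarrow> A' \<Phi> = A \<Phi>))"
    using ba rp un by blast
next
  assume "\<exists>A. basic_assignment A \<and> represents B nabla A \<and>
       (\<forall>A'. basic_assignment A' \<and> represents B nabla A' \<longrightarrow>
          (\<forall>\<Phi>. is_profile \<Phi> \<longrightarrow> A' \<Phi> = A \<Phi>))"
  then obtain A where ba: "basic_assignment A" and rp: "represents B nabla A" by blast
  have M: "models (B (nabla \<Phi> E)) = max_set (models (B E)) (A \<Phi>)" if "is_profile \<Phi>" for \<Phi> E
    using rp that by (simp add: represents_def)
  have T: "total_preorder (A \<Phi>)" if "is_profile \<Phi>" for \<Phi>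
    using ba that by (simp add: basic_assignment_def assignment_def)
  have Q: "A \<Phi> = A \<Psi>" if "is_profile \<Phi>" "is_profile \<Psi>" "profile_equiv \<Phi> \<Psi>" for \<Phi> \<Psi>
    using ba that by (simp add: basic_assignment_def)
  show "es_basic_fusion B nabla"
    unfolding es_basic_fusion_def
  proof (intro conjI allI impI)
    fix \<Phi> :: "'s \<rightharpoonup> 'e" and E assume "is_profile \<Phi>"
    then show "B (nabla \<Phi> E) \<turnstile>\<^sub>P B E" using M by (auto simp: entails_def max_set_def)
  next
    fix \<Phi> \<Phi>' :: "'s \<rightharpoonup> 'e" and E E' assume "is_profile \<Phi>" "is_profile \<Phi>'" "profile_equiv \<Phi> \<Phi>'" "B E \<equiv>\<^sub>P B E'"
    then show "B (nabla \<Phi> E) \<equiv>\<^sub>P B (nabla \<Phi>' E')"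
      using M Q by (simp add: lequiv_def)
  next
    fix \<Phi> :: "'s \<rightharpoonup> 'e" and E E' E'' assume P: "is_profile \<Phi>" and eq: "B E \<equiv>\<^sub>P Conj (B E') (B E'')"
    show "Conj (B (nabla \<Phi> E')) (B E'') \<turnstile>\<^sub>P B (nabla \<Phi> E)"
      using eq M[OF P] unfolding entails_def lequiv_def max_set_def by auto
  next
    fix \<Phi> :: "'s \<rightharpoonup> 'e" and E E' E'' assume P: "is_profile \<Phi>" and eq: "B E \<equiv>\<^sub>P Conj (B E') (B E'')"
      and nc: "\<not> (Conj (B (nabla \<Phi> E')) (B E'') \<turnstile>\<^sub>P Bot)"
    from nc obtain d where d: "d \<in> models (B (nabla \<Phi> E'))" "d \<in> models (B E'')"
      by (auto simp: entails_def)
    have dm: "d \<in> models (B E')" "\<forall>x\<in>models (B E'). A \<Phi> d x"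
      using d(1) M[OF P] by (auto simp: max_set_def)
    have dE: "d \<in> models (B E)" using eq dm d(2) by (auto simp: lequiv_def)
    show "B (nabla \<Phi> E) \<turnstile>\<^sub>P Conj (B (nabla \<Phi> E')) (B E'')"
      unfolding entails_def
    proof
      fix c assume c: "c \<in> models (B (nabla \<Phi> E))"
      then have cE: "c \<in> models (B E)" and cd: "A \<Phi> c d"
        using M[OF P] dE by (auto simp: max_set_def)
      have "A \<Phi> c x" if "x \<in> models (B E')" for x
        using T[OF P] cd dm(2) that unfolding total_preorder_def by blast
      then show "c \<in> models (Conj (B (nabla \<Phi> E')) (B E''))"
        using cE eq M[OF P] by (auto simp: lequiv_def max_set_def)
    qed
  qed
qed

end
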